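(* Let $\mathcal L\subseteq\mathfrak P(S)$ be an algebraic lattice of sets and let $c$ be a closure operation on $\mathcal L$. Then $$\mathrm{Cl}^\mathrm{cons}(\{F^c\mid F\in\mathcal L_\mathrm{fin}\})=\mathrm{Cl}^\mathrm{cons}(\mathcal L^c)=\mathcal L^{c_f},$$ closures being taken in $\mathcal L$ with the constructible topology.
   Context: $S$ is a nonempty set. An algebraic lattice of sets is a family $\mathcal L\subseteq\mathfrak P(S)$ closed under arbitrary intersections and nonempty up-directed unions. For $F\subseteq S$ let $\langle F\rangle$ be the intersection of all members of $\mathcal L$ containing $F$; $A\in\mathcal L$ is finitely generated if $A=\langle F\rangle$ for a finite $F$, and $\mathcal L_\mathrm{fin}$ is the set of such. A closure operation on $\mathcal L$ is a map $c:\mathcal L\to\mathcal L$, $A\mapsto A^c$, with $A\subseteq A^c$, $A\subseteq B\Rightarrow A^c\subseteq B^c$, $(A^c)^c=A^c$. Its finite-type associate is $A^{c_f}:=\bigcup\{F^c\mid F\in\mathcal L_\mathrm{fin},\ F\subseteq A\}$. For a closure $d$, $\mathcal L^d:=\{A\in\mathcal L\mid A^d=A\}$. The Zariski topology on $\mathcal L$ has basis $\{A\in\mathcal L\mid G\subseteq A\}$, $G\subseteq S$ finite; it is spectral, and the constructible topology is the coarsest topology in which all its open quasi-compact sets are clopen. *)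

theory Defs
  imports "HOL-Analysis.Analysis"
begin

text \<open>Algebraic lattice of sets on the ground set S: closed under arbitrary
  intersections (the empty intersection being S) and nonempty up-directed unions.\<close>
definition algebraic_lattice :: "'a set \<Rightarrow> 'a set set \<Rightarrow> bool" where
  "algebraic_lattice S L \<longleftrightarrow>
     L \<subseteq> Pow S \<and>
     (\<forall>K \<subseteq> L. S \<inter> \<Inter>K \<in> L) \<and>
     (\<forall>K \<subseteq> L. K \<noteq> {} \<and> (\<forall>A\<in>K. \<forall>B\<in>K. \<exists>C\<in>K. A \<union> B \<subseteq> C) \<longrightarrow> \<Union>K \<in> L)"

definition gen :: "'a set \<Rightarrow> 'a set set \<Rightarrow> 'a set \<Rightarrow> 'a set" where
  "gen S L F = S \<inter> \<Inter>{A \<in> L. F \<subseteq> A}"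

definition Lfin :: "'a set \<Rightarrow> 'a set set \<Rightarrow> 'a set set" where
  "Lfin S L = {A \<in> L. \<exists>F. finite F \<and> F \<subseteq> S \<and> A = gen S L F}"

definition closure_operation :: "'a set set \<Rightarrow> ('a set \<Rightarrow> 'a set) \<Rightarrow> bool" where
  "closure_operation L c \<longleftrightarrow>
     (\<forall>A\<in>L. c A \<in> L \<and> A \<subseteq> c A \<and> c (c A) = c A) \<and>
     (\<forall>A\<in>L. \<forall>B\<in>L. A \<subseteq> B \<longrightarrow> c A \<subseteq> c B)"

definition finite_type_assoc :: "'a set \<Rightarrow> 'a set set \<Rightarrow> ('a set \<Rightarrow> 'a set) \<Rightarrow> 'a set \<Rightarrow> 'a set" where
  "finite_type_assoc S L c A = \<Union>{c F | F. F \<in> Lfin S L \<and> F \<subseteq> A}"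

definition fixed_sets :: "'a set set \<Rightarrow> ('a set \<Rightarrow> 'a set) \<Rightarrow> 'a set set" where
  "fixed_sets L d = {A \<in> L. d A = A}"

definition zariski :: "'a set \<Rightarrow> 'a set set \<Rightarrow> 'a set topology" where
  "zariski S L = topology_generated_by {{A \<in> L. G \<subseteq> A} | G. finite G \<and> G \<subseteq> S}"

definition constructible :: "'a set \<Rightarrow> 'a set set \<Rightarrow> 'a set topology" where
  "constructible S L = topology_generated_by
     ({U. openin (zariski S L) U \<and> compactin (zariski S L) U} \<union>
      {L - U | U. openin (zariski S L) U \<and> compactin (zariski S L) U})"

end

theory Submission
  imports Defs
begin

lemma gen_props:
  assumes "algebraic_lattice S L" "G \<subseteq> S"
  shows "gen S L G \<in> L" "G \<subseteq> gen S L G" "\<And>A. A \<in> L \<Longrightarrow> G \<subseteq> A \<Longrightarrow> gen S L G \<subseteq> A"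
proof -
  have "{A \<in> L. G \<subseteq> A} \<subseteq> L" by auto
  then show "gen S L G \<in> L" using assms(1) unfolding algebraic_lattice_def gen_def by blast
  show "G \<subseteq> gen S L G" using assms(2) unfolding gen_def by auto
  show "\<And>A. A \<in> L \<Longrightarrow> G \<subseteq> A \<Longrightarrow> gen S L G \<subseteq> A" unfolding gen_def by auto
qed

lemma zar_nbhd:
  assumes "generate_topology_on {{A \<in> L. G \<subseteq> A} | G. finite G \<and> G \<subseteq> S} V"
  shows "A \<in> V \<Longrightarrow> \<exists>G. finite G \<and> G \<subseteq> A \<and> {B\<in>L. G \<subseteq> B} \<subseteq> V"
  using assms
proof (induction arbitrary: A rule: generate_topology_on.induct)
  case Empty
  then show ?case by simp
next
  case (Int a b)
  then obtain G1 G2 where "finite G1" "G1 \<subseteq> A" "{B\<in>L. G1 \<subseteq> B} \<subseteq> a"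
     "finite G2" "G2 \<subseteq> A" "{B\<in>L. G2 \<subseteq> B} \<subseteq> b" by (meson IntD1 IntD2)
  then show ?case by (intro exI[of _ "G1 \<union> G2"]) auto
next
  case (UN K)
  then obtain k where "k \<in> K" "A \<in> k" by auto
  with UN obtain G where "finite G" "G \<subseteq> A" "{B\<in>L. G \<subseteq> B} \<subseteq> k" by meson
  then show ?case using \<open>k \<in> K\<close> by blast
next
  case (Basis s)
  then show ?case by auto
qed

lemma zar_sub:
  assumes "generate_topology_on {{A \<in> L. G \<subseteq> A} | G. finite G \<and> G \<subseteq> S} V"
  shows "V \<subseteq> L"
  using assms by (induction rule: generate_topology_on.induct) auto

lemma topspace_zar: "topspace (zariski S L) = L"
  unfolding zariski_def topology_generated_by_topspace by auto

lemma zar_open_basic: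
  assumes "finite G" "G \<subseteq> S"
  shows "openin (zariski S L) {B \<in> L. G \<subseteq> B}"
  unfolding zariski_def openin_topology_generated_by_iff
  by (rule generate_topology_on.Basis) (use assms in auto)

lemma zar_compact_basic:
  assumes "algebraic_lattice S L" "finite G" "G \<subseteq> S"
  shows "compactin (zariski S L) {B \<in> L. G \<subseteq> B}"
  unfolding compactin_def
proof (intro conjI allI impI)
  show "{B \<in> L. G \<subseteq> B} \<subseteq> topspace (zariski S L)" using topspace_zar by auto
  fix U assume U: "(\<forall>V\<in>U. openin (zariski S L) V) \<and> {B \<in> L. G \<subseteq> B} \<subseteq> \<Union> U"
  have g: "gen S L G \<in> {B \<in> L. G \<subseteq> B}" using gen_props[OF assms(1,3)] by auto
  then obtain V where V: "V \<in> U" "gen S L G \<in> V" using U by blast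
  then have "generate_topology_on {{A \<in> L. G \<subseteq> A} | G. finite G \<and> G \<subseteq> S} V"
    using U unfolding zariski_def openin_topology_generated_by_iff by blast
  from zar_nbhd[OF this V(2)] obtain H where H: "finite H" "H \<subseteq> gen S L G" "{B\<in>L. H \<subseteq> B} \<subseteq> V"
    by blast
  have "{B \<in> L. G \<subseteq> B} \<subseteq> V"
  proof
    fix B assume "B \<in> {B \<in> L. G \<subseteq> B}"
    then have "gen S L G \<subseteq> B" using gen_props(3)[OF assms(1,3)] by auto
    then have "H \<subseteq> B" using H(2) by (rule order_trans[rotated])
    then show "B \<in> V" using H(3) \<open>B \<in> {B \<in> L. G \<subseteq> B}\<close> by blast
  qed
  then show "\<exists>F. finite F \<and> F \<subseteq> U \<and> {B \<in> L. G \<subseteq> B} \<subseteq> \<Union> F"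
    using V by (intro exI[of _ "{V}"]) auto
qed

lemma topspace_cons:
  assumes "algebraic_lattice S L"
  shows "topspace (constructible S L) = L"
proof -
  have "openin (zariski S L) L" "compactin (zariski S L) L"
    using zar_open_basic[of "{}" S L] zar_compact_basic[OF assms, of "{}"] by auto
  moreover have "openin (zariski S L) U \<Longrightarrow> U \<subseteq> L" for U
    using openin_subset topspace_zar by metis
  ultimately show ?thesis unfolding constructible_def topology_generated_by_topspace by blast
qed

lemma cons_nbhd:
  assumes alg: "algebraic_lattice S L"
  assumes "generate_topology_on ({U. openin (zariski S L) U \<and> compactin (zariski S L) U} \<union>
      {L - U | U. openin (zariski S L) U \<and> compactin (zariski S L) U}) V"
  shows "A \<in> V \<Longrightarrow> \<exists>G Y. finite G \<and> finite Y \<and> G \<subseteq> A \<and> Y \<inter> A = {} \<and>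
     {B\<in>L. G \<subseteq> B \<and> Y \<inter> B = {}} \<subseteq> V"
  using assms(2)
proof (induction arbitrary: A rule: generate_topology_on.induct)
  case Empty
  then show ?case by simp
next
  case (Int a b)
  have "A \<in> a" "A \<in> b" using Int.prems by auto
  from Int.IH(1)[OF this(1)] obtain G1 Y1 where 1: "finite G1" "finite Y1" "G1 \<subseteq> A" "Y1 \<inter> A = {}"
     "{B\<in>L. G1 \<subseteq> B \<and> Y1 \<inter> B = {}} \<subseteq> a" by blast
  from Int.IH(2)[OF \<open>A \<in> b\<close>] obtain G2 Y2 where 2: "finite G2" "finite Y2" "G2 \<subseteq> A" "Y2 \<inter> A = {}"
     "{B\<in>L. G2 \<subseteq> B \<and> Y2 \<inter> B = {}} \<subseteq> b" by blast
  show ?case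
    apply (rule exI[of _ "G1 \<union> G2"], rule exI[of _ "Y1 \<union> Y2"])
    using 1 2 apply auto
    done
next
  case (UN K)
  then obtain k where k: "k \<in> K" "A \<in> k" by auto
  from UN.IH[OF k] obtain G Y where GY: "finite G" "finite Y" "G \<subseteq> A" "Y \<inter> A = {}"
     "{B\<in>L. G \<subseteq> B \<and> Y \<inter> B = {}} \<subseteq> k" by blast
  show ?case
    apply (rule exI[of _ G], rule exI[of _ Y])
    using GY k apply auto
    done
next
  case (Basis s)
  show ?case
  proof (cases "openin (zariski S L) s \<and> compactin (zariski S L) s")
    case True
    then have "generate_topology_on {{A \<in> L. G \<subseteq> A} | G. finite G \<and> G \<subseteq> S} s"
      unfolding zariski_def openin_topology_generated_by_iff by blast
    from zar_nbhd[OF this Basis(2)] obtain G where "finite G" "G \<subseteq> A" "{B\<in>L. G \<subseteq> B} \<subseteq> s"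
      by blast
    then show ?thesis by (intro exI[of _ G] exI[of _ "{}"]) auto
  next
    case False
    then obtain U where sU: "s = L - U" and Uo: "openin (zariski S L) U" and Uc: "compactin (zariski S L) U"
      using Basis(1) False by auto
    have AL: "A \<in> L" "A \<notin> U" using Basis(2) sU by auto
    have LS: "L \<subseteq> Pow S" using alg unfolding algebraic_lattice_def by blast
    define \<U> where "\<U> = {{B \<in> L. G \<subseteq> B} | G. finite G \<and> G \<subseteq> S \<and> {B \<in> L. G \<subseteq> B} \<subseteq> U}"
    have "\<forall>W\<in>\<U>. openin (zariski S L) W"
    proof
      fix W assume "W \<in> \<U>"
      then obtain G where "W = {B \<in> L. G \<subseteq> B}" "finite G" "G \<subseteq> S" unfolding \<U>_def by blast
      then show "openin (zariski S L) W" using zar_open_basic by simp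
    qed
    moreover have "U \<subseteq> \<Union>\<U>"
    proof
      fix B assume "B \<in> U"
      have "generate_topology_on {{A \<in> L. G \<subseteq> A} | G. finite G \<and> G \<subseteq> S} U"
        using Uo unfolding zariski_def openin_topology_generated_by_iff by blast
      moreover have "U \<subseteq> L" using zar_sub[OF calculation] .
      ultimately obtain G where G: "finite G" "G \<subseteq> B" "{B\<in>L. G \<subseteq> B} \<subseteq> U" and "B \<in> L"
        using zar_nbhd[of L S U B] \<open>B \<in> U\<close> by blast
      have "G \<subseteq> S" using LS G(2) \<open>B \<in> L\<close> by blast
      then have "{B\<in>L. G \<subseteq> B} \<in> \<U>" unfolding \<U>_def using G by blast
      moreover have "B \<in> {B\<in>L. G \<subseteq> B}" using G \<open>B \<in> L\<close> by blast
      ultimately show "B \<in> \<Union>\<U>" by blast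
    qed
    ultimately obtain \<F> where F: "finite \<F>" "\<F> \<subseteq> \<U>" "U \<subseteq> \<Union>\<F>"
      using Uc unfolding compactin_def by meson
    have "\<forall>W\<in>\<F>. \<exists>y. \<forall>B\<in>L. B \<in> W \<longrightarrow> y \<in> B \<and> y \<notin> A"
    proof
      fix W assume "W \<in> \<F>"
      then have "W \<in> \<U>" using F by blast
      then obtain G where G: "W = {B \<in> L. G \<subseteq> B}" "W \<subseteq> U" unfolding \<U>_def by blast
      have "\<not> G \<subseteq> A"
      proof
        assume "G \<subseteq> A"
        then have "A \<in> W" using G(1) AL(1) by blast
        then show False using G(2) AL(2) by blast
      qed
      then obtain y where y: "y \<in> G" "y \<notin> A" by blast
      show "\<exists>y. \<forall>B\<in>L. B \<in> W \<longrightarrow> y \<in> B \<and> y \<notin> A"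
      proof (intro exI[of _ y] ballI impI)
        fix B assume "B \<in> L" "B \<in> W"
        then have "G \<subseteq> B" using G(1) by blast
        then show "y \<in> B \<and> y \<notin> A" using y by blast
      qed
    qed
    then obtain yf where yf: "\<forall>W\<in>\<F>. \<forall>B\<in>L. B \<in> W \<longrightarrow> yf W \<in> B \<and> yf W \<notin> A"
      by metis
    have "{B\<in>L. {} \<subseteq> B \<and> yf ` \<F> \<inter> B = {}} \<subseteq> s"
    proof
      fix B assume B: "B \<in> {B\<in>L. {} \<subseteq> B \<and> yf ` \<F> \<inter> B = {}}"
      show "B \<in> s"
      proof (rule ccontr)
        assume "B \<notin> s"
        then have "B \<in> U" using B sU by blast
        then obtain W where "W \<in> \<F>" "B \<in> W" using F by blast
        then show False using yf B by blast
      qed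
    qed
    moreover have "yf ` \<F> \<inter> A = {}"
    proof -
      { fix W assume W: "W \<in> \<F>"
        then have "W \<in> \<U>" using F by blast
        then obtain G where G: "W = {B \<in> L. G \<subseteq> B}" "finite G" "G \<subseteq> S" unfolding \<U>_def by blast
        have "gen S L G \<in> W" using G gen_props[OF alg G(3)] by auto
        moreover have "gen S L G \<in> L" using gen_props[OF alg G(3)] by auto
        ultimately have "yf W \<notin> A" using yf W by blast }
      then show ?thesis by blast
    qed
    ultimately show ?thesis using F(1) by (intro exI[of _ "{}"] exI[of _ "yf ` \<F>"]) auto
  qed
qed

lemma gen_Lfin:
  assumes "algebraic_lattice S L" "finite G" "G \<subseteq> S"
  shows "gen S L G \<in> Lfin S L"
  unfolding Lfin_def using gen_props(1)[OF assms(1,3)] assms(2,3) by blast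

lemma cf_I:
  assumes "F \<in> Lfin S L" "F \<subseteq> A"
  shows "c F \<subseteq> finite_type_assoc S L c A"
  unfolding finite_type_assoc_def using assms by blast

lemma cf_E:
  assumes "y \<in> finite_type_assoc S L c A"
  obtains F where "F \<in> Lfin S L" "F \<subseteq> A" "y \<in> c F"
  using assms unfolding finite_type_assoc_def by blast

theorem proposition4p5:
  fixes S :: "'a set" and L :: "'a set set" and c :: "'a set \<Rightarrow> 'a set"
  assumes "S \<noteq> {}"
    and "algebraic_lattice S L"
    and "closure_operation L c"
  shows "constructible S L closure_of {c F | F. F \<in> Lfin S L}
           = constructible S L closure_of (fixed_sets L c)
      \<and> constructible S L closure_of (fixed_sets L c)
           = fixed_sets L (finite_type_assoc S L c)"
proof -
  note alg = assms(2)
  have cL: "c A \<in> L" if "A \<in> L" for A using assms(3) that unfolding closure_operation_def by blast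
  have cext: "A \<subseteq> c A" if "A \<in> L" for A using assms(3) that unfolding closure_operation_def by blast
  have cid: "c (c A) = c A" if "A \<in> L" for A using assms(3) that unfolding closure_operation_def by blast
  have cmono: "c A \<subseteq> c B" if "A \<in> L" "B \<in> L" "A \<subseteq> B" for A B
    using assms(3) that unfolding closure_operation_def by blast
  have LS: "L \<subseteq> Pow S" using alg unfolding algebraic_lattice_def by blast
  let ?T = "constructible S L"
  let ?cf = "finite_type_assoc S L c"
  have top: "topspace ?T = L" using topspace_cons[OF alg] .
  have LfinL: "F \<in> L" if "F \<in> Lfin S L" for F using that unfolding Lfin_def by blast
  have sub_cf: "A \<subseteq> ?cf A" if "A \<in> L" for A
  proof
    fix x assume "x \<in> A"
    then have xS: "{x} \<subseteq> S" using LS that by blast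
    have 1: "gen S L {x} \<in> Lfin S L" using gen_Lfin[OF alg _ xS] by simp
    have 2: "gen S L {x} \<subseteq> A" using gen_props(3)[OF alg xS that] \<open>x \<in> A\<close> by blast
    have "x \<in> gen S L {x}" using gen_props(2)[OF alg xS] by blast
    then have "x \<in> c (gen S L {x})" using cext[OF LfinL[OF 1]] by blast
    then show "x \<in> ?cf A" using cf_I[OF 1 2, of c] by blast
  qed
  have fix_sub: "fixed_sets L c \<subseteq> fixed_sets L ?cf"
  proof
    fix A assume A: "A \<in> fixed_sets L c"
    then have AL: "A \<in> L" and cA: "c A = A" unfolding fixed_sets_def by auto
    have "?cf A \<subseteq> A"
    proof
      fix y assume "y \<in> ?cf A"
      then obtain F where F: "F \<in> Lfin S L" "F \<subseteq> A" "y \<in> c F" by (rule cf_E)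
      have "c F \<subseteq> c A" using cmono[OF LfinL[OF F(1)] AL F(2)] .
      then show "y \<in> A" using F(3) cA by blast
    qed
    then have "?cf A = A" using sub_cf[OF AL] by (rule antisym)
    then show "A \<in> fixed_sets L ?cf" using AL unfolding fixed_sets_def by simp
  qed
  have gen_sub: "{c F | F. F \<in> Lfin S L} \<subseteq> fixed_sets L c"
  proof
    fix X assume "X \<in> {c F | F. F \<in> Lfin S L}"
    then obtain F where F: "X = c F" "F \<in> Lfin S L" by blast
    show "X \<in> fixed_sets L c" unfolding fixed_sets_def F(1)
      using cL[OF LfinL[OF F(2)]] cid[OF LfinL[OF F(2)]] by simp
  qed
  have closed: "closedin ?T (fixed_sets L ?cf)"
    unfolding closedin_def
  proof
    show "fixed_sets L ?cf \<subseteq> topspace ?T" using top unfolding fixed_sets_def by blast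
    show "openin ?T (topspace ?T - fixed_sets L ?cf)"
    proof (subst openin_subopen, intro ballI)
      fix A assume A: "A \<in> topspace ?T - fixed_sets L ?cf"
      then have AL: "A \<in> L" and ne: "?cf A \<noteq> A" using top unfolding fixed_sets_def by auto
      then obtain y where y: "y \<in> ?cf A" "y \<notin> A" using sub_cf[OF AL] by blast
      obtain F where F: "F \<in> Lfin S L" "F \<subseteq> A" "y \<in> c F" using y(1) by (rule cf_E)
      then obtain G where G: "finite G" "G \<subseteq> S" "F = gen S L G" unfolding Lfin_def by blast
      have "c F \<in> L" using cL[OF LfinL[OF F(1)]] .
      then have yS: "{y} \<subseteq> S" using F(3) LS by blast
      define N where "N = {B \<in> L. G \<subseteq> B} \<inter> (L - {B \<in> L. {y} \<subseteq> B})"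
      have o1: "openin (zariski S L) {B \<in> L. G \<subseteq> B}" using zar_open_basic[OF G(1,2)] .
      have c1: "compactin (zariski S L) {B \<in> L. G \<subseteq> B}" using zar_compact_basic[OF alg G(1,2)] .
      have o2: "openin (zariski S L) {B \<in> L. {y} \<subseteq> B}" using zar_open_basic[OF _ yS] by simp
      have c2: "compactin (zariski S L) {B \<in> L. {y} \<subseteq> B}" using zar_compact_basic[OF alg _ yS] by simp
      have "openin ?T N"
        unfolding N_def constructible_def openin_topology_generated_by_iff
      proof (rule generate_topology_on.Int; rule generate_topology_on.Basis)
        show "{B \<in> L. G \<subseteq> B} \<in> {U. openin (zariski S L) U \<and> compactin (zariski S L) U} \<union>
          {L - U | U. openin (zariski S L) U \<and> compactin (zariski S L) U}" using o1 c1 by blast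
        show "L - {B \<in> L. {y} \<subseteq> B} \<in> {U. openin (zariski S L) U \<and> compactin (zariski S L) U} \<union>
          {L - U | U. openin (zariski S L) U \<and> compactin (zariski S L) U}" using o2 c2 by blast
      qed
      moreover have "A \<in> N"
      proof -
        have "G \<subseteq> gen S L G" using gen_props(2)[OF alg G(2)] .
        then have "G \<subseteq> A" using F(2) G(3) by blast
        then show ?thesis unfolding N_def using AL y(2) by blast
      qed
      moreover have "N \<subseteq> topspace ?T - fixed_sets L ?cf"
      proof
        fix B assume B: "B \<in> N"
        then have BL: "B \<in> L" "G \<subseteq> B" "y \<notin> B" unfolding N_def by auto
        then have "F \<subseteq> B" using G(3) gen_props(3)[OF alg G(2)] by blast
        then have "y \<in> ?cf B" using cf_I[OF F(1), of B c] F(3) by blast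
        then have "?cf B \<noteq> B" using BL(3) by blast
        then show "B \<in> topspace ?T - fixed_sets L ?cf" using BL(1) top unfolding fixed_sets_def by simp
      qed
      ultimately show "\<exists>T. openin ?T T \<and> A \<in> T \<and> T \<subseteq> topspace ?T - fixed_sets L ?cf" by blast
    qed
  qed
  have dense: "fixed_sets L ?cf \<subseteq> ?T closure_of {c F | F. F \<in> Lfin S L}"
  proof
    fix A assume A: "A \<in> fixed_sets L ?cf"
    then have AL: "A \<in> L" and cfA: "?cf A = A" unfolding fixed_sets_def by auto
    show "A \<in> ?T closure_of {c F | F. F \<in> Lfin S L}"
      unfolding in_closure_of
    proof (intro conjI allI impI)
      show "A \<in> topspace ?T" using top AL by simp
      fix V assume V: "A \<in> V \<and> openin ?T V"
      then have "openin ?T V" by (rule conjunct2)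
      then have gen: "generate_topology_on ({U. openin (zariski S L) U \<and> compactin (zariski S L) U} \<union>
        {L - U | U. openin (zariski S L) U \<and> compactin (zariski S L) U}) V"
        unfolding constructible_def by (rule openin_topology_generated_by)
      have "\<exists>G Y. finite G \<and> finite Y \<and> G \<subseteq> A \<and> Y \<inter> A = {} \<and>
        {B\<in>L. G \<subseteq> B \<and> Y \<inter> B = {}} \<subseteq> V" using cons_nbhd[OF alg gen conjunct1[OF V]] .
      then obtain G Y where GY: "finite G" "finite Y" "G \<subseteq> A" "Y \<inter> A = {}"
        "{B\<in>L. G \<subseteq> B \<and> Y \<inter> B = {}} \<subseteq> V" by (elim exE conjE)
      have GS: "G \<subseteq> S" using GY(3) LS AL by blast
      define F where "F = gen S L G"
      have FL: "F \<in> Lfin S L" unfolding F_def using gen_Lfin[OF alg GY(1) GS] .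
      have FA: "F \<subseteq> A" unfolding F_def using gen_props(3)[OF alg GS AL GY(3)] .
      have "c F \<subseteq> ?cf A" using cf_I[OF FL FA] .
      then have cFA: "c F \<subseteq> A" using cfA by simp
      have "G \<subseteq> F" unfolding F_def using gen_props(2)[OF alg GS] .
      then have GcF: "G \<subseteq> c F" using cext[OF LfinL[OF FL]] by blast
      have cFL: "c F \<in> L" using cL[OF LfinL[OF FL]] .
      have "Y \<inter> c F = {}" using cFA GY(4) by blast
      then have "c F \<in> {B\<in>L. G \<subseteq> B \<and> Y \<inter> B = {}}" using cFL GcF by blast
      then have "c F \<in> V" using GY(5) by blast
      moreover have "c F \<in> {c F | F. F \<in> Lfin S L}" using FL by auto
      ultimately show "\<exists>y. y \<in> {c F | F. F \<in> Lfin S L} \<and> y \<in> V" by (intro exI[of _ "c F"] conjI)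
    qed
  qed
  have a: "?T closure_of {c F | F. F \<in> Lfin S L} \<subseteq> ?T closure_of (fixed_sets L c)"
    by (rule closure_of_mono[OF gen_sub])
  have b: "?T closure_of (fixed_sets L c) \<subseteq> fixed_sets L ?cf"
    by (rule closure_of_minimal[OF fix_sub closed])
  have c: "fixed_sets L ?cf \<subseteq> ?T closure_of {c F | F. F \<in> Lfin S L}" using dense .
  show ?thesis
  proof
    show "?T closure_of {c F | F. F \<in> Lfin S L} = ?T closure_of (fixed_sets L c)"
    proof (rule subset_antisym)
      show "?T closure_of {c F | F. F \<in> Lfin S L} \<subseteq> ?T closure_of (fixed_sets L c)" using a .
      show "?T closure_of (fixed_sets L c) \<subseteq> ?T closure_of {c F | F. F \<in> Lfin S L}"
        using b c by (rule order_trans)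
    qed
    show "?T closure_of (fixed_sets L c) = fixed_sets L ?cf"
    proof (rule subset_antisym)
      show "?T closure_of (fixed_sets L c) \<subseteq> fixed_sets L ?cf" using b .
      show "fixed_sets L ?cf \<subseteq> ?T closure_of (fixed_sets L c)"
        using c a by (rule order_trans)
    qed
  qed
qed

end
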